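(* For every $j\in\{0,\dots,r-3\}$ and $n\in\mathbb{Z}$: $\chi_j(n)\ne0\Rightarrow n^2\equiv m_0^2\pmod{4P}$. (In particular $4P$ divides $m^2-m_0^2$ for every $m$ in the support of $\chi$.)
   Context: $r\ge3$; $p_1,\dots,p_r$ positive pairwise coprime, $p_2,\dots,p_r$ odd, $P=p_1\cdots p_r$, $\hat p_j=P/p_j$, $E=\{\pm1\}^r$, $\mathcal{N}_*(\underline\varepsilon)=\sum_j\varepsilon_j\hat p_j$, $m_0=(r-2-\sum_j1/p_j)P\in\mathbb{Z}$. $\chi:\mathbb{Z}\to\mathbb{Z}$ vanishes off $\mathfrak{S}=rP+\mathcal{N}_*(E)+2P\mathbb{Z}$ and on $\mathfrak{S}$ equals $\frac{(\ell+1)\cdots(\ell+r-3)}{(r-3)!}\varepsilon_1\cdots\varepsilon_r$, where $\underline\varepsilon\in E$ is the unique element with $\mathcal{N}_*(\underline\varepsilon)\equiv m-rP\bmod2P$ and $\ell=(m-(r-2)P-\mathcal{N}_*(\underline\varepsilon))/(2P)$. $\chi_0,\dots,\chi_{r-3}$ are the unique $2P$-periodic functions with $\chi(m)=\sum_jm^j\chi_j(m)$. *)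

theory Defs
  imports "HOL-Number_Theory.Number_Theory"
begin

definition PP :: "nat \<Rightarrow> (nat \<Rightarrow> int) \<Rightarrow> int" where
  "PP r p = (\<Prod>i=1..r. p i)"

definition phat :: "nat \<Rightarrow> (nat \<Rightarrow> int) \<Rightarrow> nat \<Rightarrow> int" where
  "phat r p j = PP r p div p j"

definition signs :: "nat \<Rightarrow> (nat \<Rightarrow> int) set" where
  "signs r = {e. (\<forall>i\<in>{1..r}. e i = 1 \<or> e i = -1) \<and> (\<forall>i. i \<notin> {1..r} \<longrightarrow> e i = 1)}"

definition Nstar :: "nat \<Rightarrow> (nat \<Rightarrow> int) \<Rightarrow> (nat \<Rightarrow> int) \<Rightarrow> int" where
  "Nstar r p e = (\<Sum>j=1..r. e j * phat r p j)"

text \<open>m_0 = (r - 2 - sum_j 1/p_j) P = (r-2) P - sum_j phat_j.\<close>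
definition m0 :: "nat \<Rightarrow> (nat \<Rightarrow> int) \<Rightarrow> int" where
  "m0 r p = (int r - 2) * PP r p - (\<Sum>j=1..r. phat r p j)"

text \<open>The function chi (integer valued; taken with values in rat).\<close>
definition chi :: "nat \<Rightarrow> (nat \<Rightarrow> int) \<Rightarrow> int \<Rightarrow> rat" where
  "chi r p m =
    (if \<exists>e\<in>signs r. [Nstar r p e = m - int r * PP r p] (mod (2 * PP r p)) then
       (let e = (THE e. e \<in> signs r \<and> [Nstar r p e = m - int r * PP r p] (mod (2 * PP r p)));
            l = (m - (int r - 2) * PP r p - Nstar r p e) div (2 * PP r p)
        in (\<Prod>k=1..r-3. of_int l + of_nat k) / fact (r - 3) * of_int (\<Prod>j=1..r. e j))
     else 0)"

end

theory Submission
  imports Defs "HOL-Computational_Algebra.Polynomial"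
begin

lemma phat_eq:
  assumes "j \<in> {1..r}" "p j \<noteq> 0"
  shows "phat r p j = (\<Prod>i\<in>{1..r}-{j}. p i)"
proof -
  have "PP r p = p j * (\<Prod>i\<in>{1..r}-{j}. p i)"
    unfolding PP_def using assms(1) by (simp add: prod.remove)
  then show ?thesis unfolding phat_def using assms(2) by simp
qed

lemma phat_mult_dvd:
  assumes "j \<in> {1..r}" "k \<in> {1..r}" "j \<noteq> k" "\<forall>i\<in>{1..r}. p i \<noteq> 0"
  shows "PP r p dvd phat r p j * phat r p k"
proof -
  have k: "k \<in> {1..r} - {j}" using assms by auto
  have "phat r p j = p k * (\<Prod>i\<in>{1..r}-{j}-{k}. p i)"
  proof -
    have "phat r p j = (\<Prod>i\<in>{1..r}-{j}. p i)" using phat_eq[OF assms(1)] assms(4) assms(1) by blast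
    also have "\<dots> = p k * (\<Prod>i\<in>{1..r}-{j}-{k}. p i)"
      by (rule prod.remove) (use k in auto)
    finally show ?thesis .
  qed
  moreover have "PP r p = p k * phat r p k"
    using phat_eq[OF assms(2)] assms(4) assms(2) unfolding PP_def by (simp add: prod.remove)
  ultimately have "phat r p j * phat r p k = PP r p * (\<Prod>i\<in>{1..r}-{j}-{k}. p i)"
    by (simp add: algebra_simps)
  then show ?thesis by simp
qed

lemma key:
  assumes e: "e \<in> signs r" and nz: "\<forall>i\<in>{1..r}. p i \<noteq> 0"
  shows "4 * PP r p dvd (int r * PP r p + Nstar r p e)^2 - (m0 r p)^2"
proof -
  define S where "S = {j\<in>{1..r}. e j = 1}"
  define T where "T = {j\<in>{1..r}. e j \<noteq> 1}"
  define A where "A = (\<Sum>j\<in>S. phat r p j)"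
  define B where "B = (\<Sum>j\<in>T. phat r p j)"
  define P where "P = PP r p"
  have fS: "finite S" "finite T" unfolding S_def T_def by auto
  have un: "{1..r} = S \<union> T" "S \<inter> T = {}" unfolding S_def T_def by auto
  have eT: "\<And>j. j \<in> T \<Longrightarrow> e j = -1" using e unfolding T_def signs_def by auto
  have eS: "\<And>j. j \<in> S \<Longrightarrow> e j = 1" unfolding S_def by auto
  have N: "Nstar r p e = A - B"
  proof -
    have "Nstar r p e = (\<Sum>j\<in>S. e j * phat r p j) + (\<Sum>j\<in>T. e j * phat r p j)"
      unfolding Nstar_def un(1) using fS un(2) by (simp add: sum.union_disjoint)
    also have "\<dots> = A - B" unfolding A_def B_def using eS eT
      by (simp add: sum_negf)
    finally show ?thesis .
  qed
  have M: "m0 r p = (int r - 2) * P - (A + B)"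
    unfolding m0_def A_def B_def P_def un(1) using fS un(2) by (simp add: sum.union_disjoint)
  have AB: "P dvd A * B"
    unfolding A_def B_def sum_product P_def
  proof (intro dvd_sum)
    fix j k assume "j \<in> S" "k \<in> T"
    then show "PP r p dvd phat r p j * phat r p k"
    proof -
      have "j \<in> {1..r}" "k \<in> {1..r}" "j \<noteq> k" using \<open>j \<in> S\<close> \<open>k \<in> T\<close> un by auto
      then show ?thesis using phat_mult_dvd[of j r k p] nz by blast
    qed
  qed
  then obtain t where t: "A * B = P * t" by auto
  have "(int r * P + (A - B))^2 - ((int r - 2) * P - (A + B))^2
      = 4 * P * ((int r - 1) * P - B + A * (int r - 1) - t)"
    by (simp add: power2_eq_square algebra_simps t[symmetric])
  then show ?thesis using N M P_def by simp
qed

theorem proposition4p8: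
  fixes r :: nat and p :: "nat \<Rightarrow> int" and c :: "nat \<Rightarrow> int \<Rightarrow> rat"
  assumes r3: "r \<ge> 3"
    and pos: "\<forall>i\<in>{1..r}. p i > 0"
    and copr: "\<forall>i\<in>{1..r}. \<forall>j\<in>{1..r}. i \<noteq> j \<longrightarrow> coprime (p i) (p j)"
    and odd: "\<forall>i\<in>{2..r}. odd (p i)"
    and per: "\<forall>j\<le>r-3. \<forall>n. c j (n + 2 * PP r p) = c j n"
    and dec: "\<forall>m. chi r p m = (\<Sum>j\<le>r-3. of_int m ^ j * c j m)"
  shows "\<forall>j\<le>r-3. \<forall>n. c j n \<noteq> 0 \<longrightarrow> [n^2 = (m0 r p)^2] (mod (4 * PP r p))"
proof (intro allI impI)
  fix j n assume j: "j \<le> r - 3" and cne: "c j n \<noteq> 0"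
  define P where "P = PP r p"
  have nz: "\<forall>i\<in>{1..r}. p i \<noteq> 0" using pos by force
  have Ppos: "P > 0" unfolding P_def PP_def using pos by (intro prod_pos) auto
  have perk: "c i (n + 2 * P * int k) = c i n" if "i \<le> r - 3" for i k
  proof (induction k)
    case 0 then show ?case by simp
  next
    case (Suc k)
    have "c i (n + 2 * P * int (Suc k)) = c i ((n + 2 * P * int k) + 2 * PP r p)"
      unfolding P_def by (simp add: algebra_simps)
    also have "\<dots> = c i (n + 2 * P * int k)" using per that by blast
    finally show ?case using Suc by simp
  qed
  have ex: "\<exists>e\<in>signs r. [Nstar r p e = n - int r * P] (mod (2 * P))"
  proof (rule ccontr)
    assume nex: "\<not> ?thesis"
    define q where "q = (\<Sum>i\<le>r-3. monom (c i n) i)"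
    have cq: "coeff q i = (if i \<le> r - 3 then c i n else 0)" for i
      unfolding q_def coeff_sum by (simp add: coeff_monom)
    have root: "poly q (of_int (n + 2 * P * int k)) = 0" for k
    proof -
      define m where "m = n + 2 * P * int k"
      have "\<not> (\<exists>e\<in>signs r. [Nstar r p e = m - int r * P] (mod (2 * P)))"
      proof
        assume "\<exists>e\<in>signs r. [Nstar r p e = m - int r * P] (mod (2 * P))"
        then obtain e where e: "e \<in> signs r" "[Nstar r p e = m - int r * P] (mod (2 * P))" by blast
        have "[m - int r * P = n - int r * P] (mod (2 * P))"
          unfolding m_def cong_iff_dvd_diff by simp
        then have "[Nstar r p e = n - int r * P] (mod (2 * P))" using e(2) cong_trans by blast
        then show False using nex e(1) by blast
      qed
      then have "chi r p m = 0" unfolding chi_def P_def by simp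
      then have "(\<Sum>i\<le>r-3. of_int m ^ i * c i m) = 0" using dec by simp
      moreover have "(\<Sum>i\<le>r-3. of_int m ^ i * c i m) = (\<Sum>i\<le>r-3. of_int m ^ i * c i n)"
        unfolding m_def using perk by (intro sum.cong) auto
      ultimately show ?thesis unfolding q_def m_def by (simp add: poly_sum poly_monom mult.commute)
    qed
    have "q = 0"
    proof (rule ccontr)
      assume "q \<noteq> 0"
      then have fin: "finite {x. poly q x = 0}" by (rule poly_roots_finite)
      have "range (\<lambda>k::nat. (of_int (n + 2 * P * int k) :: rat)) \<subseteq> {x. poly q x = 0}"
        using root by auto
      moreover have "inj (\<lambda>k::nat. (of_int (n + 2 * P * int k) :: rat))"
        using Ppos by (auto simp: inj_def)
      ultimately show False using fin finite_subset range_inj_infinite by blast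
    qed
    then have "coeff q j = 0" by simp
    then show False using cq j cne by simp
  qed
  then obtain e where e: "e \<in> signs r" "[Nstar r p e = n - int r * P] (mod (2 * P))" by blast
  define x where "x = int r * P + Nstar r p e"
  from e(2) have "2 * P dvd n - x" unfolding x_def cong_iff_dvd_diff
    by (metis dvd_minus_iff minus_diff_eq diff_diff_eq2 add.commute diff_diff_eq)
  then obtain t where t: "n = x + 2 * P * t" by (metis dvd_def eq_diff_eq add.commute)
  have "n^2 - x^2 = 4 * P * (t * x + P * t^2)" unfolding t by (simp add: power2_eq_square algebra_simps)
  then have d1: "4 * P dvd n^2 - x^2" by simp
  have d2: "4 * P dvd x^2 - (m0 r p)^2" using key[OF e(1) nz] unfolding x_def P_def by simp
  have "4 * P dvd (n^2 - x^2) + (x^2 - (m0 r p)^2)" using d1 d2 by (rule dvd_add)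
  then show "[n^2 = (m0 r p)^2] (mod (4 * PP r p))" unfolding cong_iff_dvd_diff P_def by simp
qed

end
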